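(* Fix integers $N\ge1$, $K\ge1$, and for each $k\in\{1,\dots,K\}$ parameters $\theta_k>0$, $a_k>0$, $\rho_k\in[0,1]$; let $\sigma_v,\sigma_u,\sigma_\eta,\sigma_\nu>0$ and $\bar\rho=K^{-1}\sum_k\rho_k$. For $\phi\in[0,1]$ let $\lambda(\phi)=\frac{\sigma_v}{2\sigma_u}\big(1+\phi^2\bar\rho^2\sigma_\eta^2/\sigma_v^2\big)^{-1/2}$ and $\delta_k(\phi)=N\phi a_k\rho_k/\lambda(\phi)$. Define the cross-sectional dispersion of AI fund returns $$D(\phi)=\sqrt{\sum_{k=1}^K\frac{(1-\rho_k^2)\sigma_\nu^2a_k^2}{\left[\theta_k+\delta_k(\phi)\right]^2}}.$$ Then $D(\phi)$ is monotonically decreasing in $\phi$, and in the monoculture limit ($\phi\to1$ and $\rho_k\to1$ for all $k$), $D\to 0$.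
   Context: In the model, $D(\phi)$ is the paper's expression for $\sqrt{\operatorname{Var}_i[\sum_k\alpha_{i,k}(\phi)]}$, the cross-sectional standard deviation over AI investors $i$ of their total alpha; $\sigma_\nu^2$ is the variance of the idiosyncratic noise in AI signals, $\rho_k$ the algorithmic homogeneity of signal $k$, $a_k$ the aggressiveness parameter, $\theta_k$ the natural mean-reversion rate of signal $k$, $\phi$ the AI adoption rate among $N$ investors, $\sigma_u^2$ noise-trader variance, $\sigma_v$ fundamental volatility, $\sigma_\eta^2$ common AI noise variance. *)

theory Defs
  imports "HOL-Analysis.Analysis"
begin

text \<open>Signals k range over a finite index type 'k, so K = CARD('k) \<ge> 1.
  Per-signal parameters are vectors in real^'k.\<close>

definition rho_bar :: "real^'k::finite \<Rightarrow> real" where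
  "rho_bar \<rho> = (\<Sum>k\<in>UNIV. \<rho> $ k) / real CARD('k)"

definition lam :: "real \<Rightarrow> real \<Rightarrow> real \<Rightarrow> real^'k::finite \<Rightarrow> real \<Rightarrow> real" where
  "lam \<sigma>v \<sigma>u \<sigma>\<eta> \<rho> \<phi> =
     \<sigma>v / (2 * \<sigma>u) * (1 + \<phi>^2 * (rho_bar \<rho>)^2 * \<sigma>\<eta>^2 / \<sigma>v^2) powr (-1/2)"

definition delta :: "nat \<Rightarrow> real^'k::finite \<Rightarrow> real \<Rightarrow> real \<Rightarrow> real \<Rightarrow> real^'k \<Rightarrow> real \<Rightarrow> 'k \<Rightarrow> real" where
  "delta N a \<sigma>v \<sigma>u \<sigma>\<eta> \<rho> \<phi> k =
     real N * \<phi> * (a $ k) * (\<rho> $ k) / lam \<sigma>v \<sigma>u \<sigma>\<eta> \<rho> \<phi>"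

definition Disp :: "nat \<Rightarrow> real^'k::finite \<Rightarrow> real^'k \<Rightarrow> real \<Rightarrow> real \<Rightarrow> real \<Rightarrow> real \<Rightarrow> real^'k \<Rightarrow> real \<Rightarrow> real" where
  "Disp N \<theta> a \<sigma>v \<sigma>u \<sigma>\<eta> \<sigma>\<nu> \<rho> \<phi> =
     sqrt (\<Sum>k\<in>UNIV. (1 - (\<rho> $ k)^2) * \<sigma>\<nu>^2 * (a $ k)^2
                      / ((\<theta> $ k) + delta N a \<sigma>v \<sigma>u \<sigma>\<eta> \<rho> \<phi> k)^2)"

end

theory Submission
  imports Defs
begin

lemma lam_pos:
  assumes "\<sigma>v > 0" "\<sigma>u > 0"
  shows "lam \<sigma>v \<sigma>u \<sigma>\<eta> \<rho> \<phi> > 0"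
proof -
  have "1 + \<phi>^2 * (rho_bar \<rho>)^2 * \<sigma>\<eta>^2 / \<sigma>v^2 > 0"
    by (simp add: add_pos_nonneg)
  then show ?thesis unfolding lam_def using assms by simp
qed

lemma lam_anti:
  assumes "\<sigma>v > 0" "\<sigma>u > 0" "0 \<le> \<phi>1" "\<phi>1 \<le> \<phi>2"
  shows "lam \<sigma>v \<sigma>u \<sigma>\<eta> \<rho> \<phi>2 \<le> lam \<sigma>v \<sigma>u \<sigma>\<eta> \<rho> \<phi>1"
proof -
  let ?c = "(rho_bar \<rho>)^2 * \<sigma>\<eta>^2 / \<sigma>v^2"
  have c: "?c \<ge> 0" by simp
  have p: "\<phi>1^2 \<le> \<phi>2^2" using assms by (simp add: power_mono)
  have e: "\<phi>^2 * (rho_bar \<rho>)^2 * \<sigma>\<eta>^2 / \<sigma>v^2 = \<phi>^2 * ?c" for \<phi> by simp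
  have "\<phi>1^2 * ?c \<le> \<phi>2^2 * ?c" using p c by (rule mult_right_mono)
  then have "1 + \<phi>1^2 * ?c \<le> 1 + \<phi>2^2 * ?c" by simp
  moreover have "1 + \<phi>1^2 * ?c > 0" using c by (simp add: add_pos_nonneg)
  ultimately have "(1 + \<phi>2^2 * ?c) powr (-1/2) \<le> (1 + \<phi>1^2 * ?c) powr (-1/2)"
    by (intro powr_mono2') auto
  then show ?thesis unfolding lam_def e using assms
    by (intro mult_left_mono) auto
qed

lemma delta_nonneg:
  assumes "\<sigma>v > 0" "\<sigma>u > 0" "0 \<le> \<phi>" "a $ k > 0" "\<rho> $ k \<ge> 0"
  shows "delta N a \<sigma>v \<sigma>u \<sigma>\<eta> \<rho> \<phi> k \<ge> 0"
  unfolding delta_def using assms lam_pos[OF assms(1,2), of \<sigma>\<eta> \<rho> \<phi>]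
  by (intro divide_nonneg_pos) auto

lemma delta_mono:
  assumes "\<sigma>v > 0" "\<sigma>u > 0" "0 \<le> \<phi>1" "\<phi>1 \<le> \<phi>2" "a $ k > 0" "\<rho> $ k \<ge> 0"
  shows "delta N a \<sigma>v \<sigma>u \<sigma>\<eta> \<rho> \<phi>1 k \<le> delta N a \<sigma>v \<sigma>u \<sigma>\<eta> \<rho> \<phi>2 k"
  unfolding delta_def
proof (rule frac_le)
  show "0 \<le> real N * \<phi>2 * a $ k * \<rho> $ k" using assms by simp
  show "real N * \<phi>1 * a $ k * \<rho> $ k \<le> real N * \<phi>2 * a $ k * \<rho> $ k"
    using assms by (intro mult_right_mono) (auto intro: mult_left_mono)
  show "0 < lam \<sigma>v \<sigma>u \<sigma>\<eta> \<rho> \<phi>2" using lam_pos assms by blast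
  show "lam \<sigma>v \<sigma>u \<sigma>\<eta> \<rho> \<phi>2 \<le> lam \<sigma>v \<sigma>u \<sigma>\<eta> \<rho> \<phi>1" using lam_anti assms by blast
qed

theorem corollary1:
  fixes N :: nat and \<theta> a \<rho> :: "real^'k::finite"
    and \<sigma>v \<sigma>u \<sigma>\<eta> \<sigma>\<nu> :: real
  assumes "N \<ge> 1"
    and "\<And>k. \<theta> $ k > 0" and "\<And>k. a $ k > 0"
    and "\<And>k. 0 \<le> \<rho> $ k \<and> \<rho> $ k \<le> 1"
    and "\<sigma>v > 0" "\<sigma>u > 0" "\<sigma>\<eta> > 0" "\<sigma>\<nu> > 0"
  shows "(\<forall>\<phi>1 \<phi>2. 0 \<le> \<phi>1 \<longrightarrow> \<phi>1 \<le> \<phi>2 \<longrightarrow> \<phi>2 \<le> 1 \<longrightarrow>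
            Disp N \<theta> a \<sigma>v \<sigma>u \<sigma>\<eta> \<sigma>\<nu> \<rho> \<phi>2 \<le> Disp N \<theta> a \<sigma>v \<sigma>u \<sigma>\<eta> \<sigma>\<nu> \<rho> \<phi>1)
       \<and> ((\<lambda>(\<phi>, r). Disp N \<theta> a \<sigma>v \<sigma>u \<sigma>\<eta> \<sigma>\<nu> r \<phi>) \<longlongrightarrow> 0)
           (at (1, \<chi> k. 1) within ({0..1} \<times> {r. \<forall>k. 0 \<le> r $ k \<and> r $ k \<le> 1}))"
proof
  show "\<forall>\<phi>1 \<phi>2. 0 \<le> \<phi>1 \<longrightarrow> \<phi>1 \<le> \<phi>2 \<longrightarrow> \<phi>2 \<le> 1 \<longrightarrow>
            Disp N \<theta> a \<sigma>v \<sigma>u \<sigma>\<eta> \<sigma>\<nu> \<rho> \<phi>2 \<le> Disp N \<theta> a \<sigma>v \<sigma>u \<sigma>\<eta> \<sigma>\<nu> \<rho> \<phi>1"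
  proof (intro allI impI)
    fix \<phi>1 \<phi>2 :: real
    assume h: "0 \<le> \<phi>1" "\<phi>1 \<le> \<phi>2" "\<phi>2 \<le> 1"
    show "Disp N \<theta> a \<sigma>v \<sigma>u \<sigma>\<eta> \<sigma>\<nu> \<rho> \<phi>2 \<le> Disp N \<theta> a \<sigma>v \<sigma>u \<sigma>\<eta> \<sigma>\<nu> \<rho> \<phi>1"
      unfolding Disp_def
    proof (intro real_sqrt_le_mono sum_mono)
      fix k
      let ?n = "(1 - (\<rho> $ k)^2) * \<sigma>\<nu>^2 * (a $ k)^2"
      let ?d1 = "\<theta> $ k + delta N a \<sigma>v \<sigma>u \<sigma>\<eta> \<rho> \<phi>1 k"
      let ?d2 = "\<theta> $ k + delta N a \<sigma>v \<sigma>u \<sigma>\<eta> \<rho> \<phi>2 k"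
      have r: "0 \<le> \<rho> $ k" "\<rho> $ k \<le> 1" using assms(4) by auto
      have "(\<rho> $ k)^2 \<le> 1" using r by (simp add: power_le_one)
      then have n: "?n \<ge> 0" by simp
      have d1: "?d1 > 0" using delta_nonneg[of \<sigma>v \<sigma>u \<phi>1 a k \<rho>] assms(2,3,5,6) h r
        by (simp add: add_pos_nonneg)
      have "?d1 \<le> ?d2" using delta_mono[of \<sigma>v \<sigma>u \<phi>1 \<phi>2 a k \<rho>] assms(3,5,6) h r by simp
      then have "?d1^2 \<le> ?d2^2" using d1 by (simp add: power_mono)
      moreover have "?d1^2 > 0" using d1 by simp
      ultimately have "?d2^2 * ?d1^2 > 0" by (meson less_le_trans mult_pos_pos)
      then show "?n / ?d2^2 \<le> ?n / ?d1^2" using n \<open>?d1^2 \<le> ?d2^2\<close>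
        by (intro divide_left_mono) auto
    qed
  qed
next
  let ?S = "{0..1::real} \<times> {r::real^'k. \<forall>k. 0 \<le> r $ k \<and> r $ k \<le> 1}"
  let ?F = "at (1::real, (\<chi> k. 1) :: real^'k) within ?S"
  let ?g = "\<lambda>(\<phi>::real, r::real^'k). sqrt (\<Sum>k\<in>UNIV. (1 - (r $ k)^2) * (\<sigma>\<nu>^2 * (a $ k)^2 / (\<theta> $ k)^2))"
  have g: "(?g \<longlongrightarrow> 0) ?F"
  proof -
    have sn: "(snd \<longlongrightarrow> snd (1::real, (\<chi> k. 1) :: real^'k)) ?F"
      by (intro tendsto_snd tendsto_ident_at)
    have "((\<lambda>x::real\<times>(real^'k). sqrt (\<Sum>k\<in>UNIV. (1 - ((snd x) $ k)^2) * (\<sigma>\<nu>^2 * (a $ k)^2 / (\<theta> $ k)^2)))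
          \<longlongrightarrow> sqrt (\<Sum>k\<in>UNIV. (1 - ((((\<chi> k. 1)::real^'k)) $ k)^2) * (\<sigma>\<nu>^2 * (a $ k)^2 / (\<theta> $ k)^2))) ?F"
      by (intro tendsto_intros) (use sn in \<open>auto intro!: tendsto_intros tendsto_vec_nth\<close>)
    then show ?thesis by (simp add: case_prod_unfold)
  qed
  show "((\<lambda>(\<phi>, r). Disp N \<theta> a \<sigma>v \<sigma>u \<sigma>\<eta> \<sigma>\<nu> r \<phi>) \<longlongrightarrow> 0) ?F"
  proof (rule tendsto_sandwich[OF _ _ tendsto_const g])
    show "\<forall>\<^sub>F x in ?F. 0 \<le> (case x of (\<phi>, r) \<Rightarrow> Disp N \<theta> a \<sigma>v \<sigma>u \<sigma>\<eta> \<sigma>\<nu> r \<phi>)"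
      unfolding eventually_at_filter
    proof (intro always_eventually allI impI)
      fix x :: "real \<times> (real^'k)"
      assume "x \<in> ?S"
      then obtain \<phi> r where x: "x = (\<phi>, r)" "\<And>k. 0 \<le> r $ k \<and> r $ k \<le> 1"
        by (cases x) auto
      show "0 \<le> (case x of (\<phi>, r) \<Rightarrow> Disp N \<theta> a \<sigma>v \<sigma>u \<sigma>\<eta> \<sigma>\<nu> r \<phi>)"
        unfolding x(1) Disp_def split
      proof (intro real_sqrt_ge_zero sum_nonneg divide_nonneg_nonneg)
        fix k
        have r: "0 \<le> r $ k" "r $ k \<le> 1" using x(2) by auto
        have "(r $ k)^2 \<le> 1" using r by (simp add: power_le_one)
        then show "(1 - (r $ k)^2) * \<sigma>\<nu>^2 * (a $ k)^2 \<ge> 0" by simp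
      qed simp
    qed
    show "\<forall>\<^sub>F x in ?F. (case x of (\<phi>, r) \<Rightarrow> Disp N \<theta> a \<sigma>v \<sigma>u \<sigma>\<eta> \<sigma>\<nu> r \<phi>) \<le> ?g x"
      unfolding eventually_at_filter
    proof (intro always_eventually allI impI)
      fix x :: "real \<times> (real^'k)"
      assume "x \<in> ?S"
      then obtain \<phi> r where x: "x = (\<phi>, r)" "0 \<le> \<phi>" "\<phi> \<le> 1" "\<And>k. 0 \<le> r $ k \<and> r $ k \<le> 1"
        by (cases x) auto
      show "(case x of (\<phi>, r) \<Rightarrow> Disp N \<theta> a \<sigma>v \<sigma>u \<sigma>\<eta> \<sigma>\<nu> r \<phi>) \<le> ?g x"
        unfolding x(1) Disp_def split
      proof (intro real_sqrt_le_mono sum_mono)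
        fix k
        let ?d = "\<theta> $ k + delta N a \<sigma>v \<sigma>u \<sigma>\<eta> r \<phi> k"
        have r: "0 \<le> r $ k" "r $ k \<le> 1" using x(4) by auto
        have "(r $ k)^2 \<le> 1" using r by (simp add: power_le_one)
        then have n: "(1 - (r $ k)^2) * \<sigma>\<nu>^2 * (a $ k)^2 \<ge> 0" by simp
        have dn: "delta N a \<sigma>v \<sigma>u \<sigma>\<eta> r \<phi> k \<ge> 0"
          using delta_nonneg[of \<sigma>v \<sigma>u \<phi> a k r] assms(3,5,6) x r by simp
        have t: "\<theta> $ k > 0" using assms(2) by simp
        have "(\<theta> $ k)^2 \<le> ?d^2" using dn t by (simp add: power_mono)
        moreover have "(\<theta> $ k)^2 > 0" using t by simp
        ultimately have "?d^2 * (\<theta> $ k)^2 > 0" by (meson less_le_trans mult_pos_pos)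
        then have "(1 - (r $ k)^2) * \<sigma>\<nu>^2 * (a $ k)^2 / ?d^2 \<le> (1 - (r $ k)^2) * \<sigma>\<nu>^2 * (a $ k)^2 / (\<theta> $ k)^2"
          using n \<open>(\<theta> $ k)^2 \<le> ?d^2\<close> by (intro divide_left_mono) auto
        then show "(1 - (r $ k)^2) * \<sigma>\<nu>^2 * (a $ k)^2 / ?d^2 \<le> (1 - (r $ k)^2) * (\<sigma>\<nu>^2 * (a $ k)^2 / (\<theta> $ k)^2)"
          by simp
      qed
    qed
  qed
qed

end
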